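(* Fix a constant $p>0$. Let $q(n,\ell)$ be any function with $q(n,\ell)/(\ell n)\to 0$ as $n,\ell\to\infty$ (i.e., for every $\varepsilon>0$ there is $N$ such that $q(n,\ell)\le \varepsilon \ell n$ whenever $n,\ell\ge N$). Then there is no randomized algorithm that, for every tournament $T$ on $n$ vertices whose champions lose $\ell$ matches, performs at most $q(n,\ell)$ arc lookups and outputs a champion of $T$ with probability at least $p$.
   Context: A tournament $T=(V,E)$ is an oriented complete graph: for every pair of distinct vertices $u,v$ exactly one of $(u,v)$, $(v,u)$ is in $E$; $(u,v)\in E$ means "$u$ beats $v$". An arc lookup is a query that, given distinct $u,v$, reveals the orientation of the arc between them. A champion (Copeland winner) is a vertex of maximum out-degree, i.e., one losing the fewest matches; $\ell$ denotes the number of matches it loses. A randomized algorithm may use internal random coins; the probability is over these coins, and the success guarantee must hold for every input tournament. *)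

theory Defs
  imports "HOL-Probability.Probability_Mass_Function"
begin

text \<open>Tournaments on the vertex set {0..<n}: T u v means u beats v.
  The relation is empty outside {0..<n}, irreflexive, and for distinct
  vertices exactly one orientation holds.\<close>
definition tournament :: "nat \<Rightarrow> (nat \<Rightarrow> nat \<Rightarrow> bool) \<Rightarrow> bool" where
  "tournament n T \<longleftrightarrow>
     (\<forall>u v. T u v \<longrightarrow> u < n \<and> v < n) \<and>
     (\<forall>u. \<not> T u u) \<and>
     (\<forall>u<n. \<forall>v<n. u \<noteq> v \<longrightarrow> (T u v \<longleftrightarrow> \<not> T v u))"

definition outdeg :: "nat \<Rightarrow> (nat \<Rightarrow> nat \<Rightarrow> bool) \<Rightarrow> nat \<Rightarrow> nat" where
  "outdeg n T v = card {u. u < n \<and> T v u}"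

definition champion :: "nat \<Rightarrow> (nat \<Rightarrow> nat \<Rightarrow> bool) \<Rightarrow> nat \<Rightarrow> bool" where
  "champion n T v \<longleftrightarrow> v < n \<and> (\<forall>u<n. outdeg n T u \<le> outdeg n T v)"

definition champ_losses :: "nat \<Rightarrow> (nat \<Rightarrow> nat \<Rightarrow> bool) \<Rightarrow> nat" where
  "champ_losses n T = n - 1 - Max {outdeg n T v | v. v < n}"

text \<open>Deterministic adaptive arc-lookup algorithms = decision trees.
  Query u v l r: look up the arc between u and v; continue with l if u beats v,
  with r otherwise. Leaf w: output w.\<close>
datatype dtree = Leaf nat | Query nat nat dtree dtree

fun run :: "(nat \<Rightarrow> nat \<Rightarrow> bool) \<Rightarrow> dtree \<Rightarrow> nat" where
  "run T (Leaf w) = w"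
| "run T (Query u v l r) = (if T u v then run T l else run T r)"

fun lookups :: "(nat \<Rightarrow> nat \<Rightarrow> bool) \<Rightarrow> dtree \<Rightarrow> nat" where
  "lookups T (Leaf w) = 0"
| "lookups T (Query u v l r) = Suc (if T u v then lookups T l else lookups T r)"

text \<open>A randomized algorithm for n-vertex tournaments is a probability
  distribution over decision trees (its internal coins choose the tree).\<close>

end

theory Submission
  imports Defs
begin

fun qs :: "(nat \<Rightarrow> nat \<Rightarrow> bool) \<Rightarrow> nat \<Rightarrow> dtree \<Rightarrow> (nat \<times> nat) set" where
  "qs T 0 t = {}"
| "qs T (Suc k) (Leaf w) = {}"
| "qs T (Suc k) (Query u v l r) = insert (u,v) (qs T k (if T u v then l else r))"

lemma qs_card: "finite (qs T k t) \<and> card (qs T k t) \<le> k"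
proof (induction k arbitrary: t)
  case 0 then show ?case by simp
next
  case (Suc k) then show ?case
    by (cases t) (auto simp: card_insert_if intro: le_SucI)
qed

lemma agree:
  "\<forall>(u,v)\<in>qs T k t. T' u v = T u v \<Longrightarrow>
   (lookups T t < k \<longrightarrow> run T' t = run T t) \<and> (lookups T t \<ge> k \<longrightarrow> lookups T' t \<ge> k)"
proof (induction k arbitrary: t)
  case 0 then show ?case by simp
next
  case (Suc k) then show ?case
    by (cases t) (auto split: if_splits)
qed

definition R :: "nat \<Rightarrow> nat \<Rightarrow> nat \<Rightarrow> bool" where
  "R m u v \<longleftrightarrow> u < 2*m+1 \<and> v < 2*m+1 \<and> ((u < v \<and> v \<le> u + m) \<or> (v < u \<and> u > v + m))"

definition F :: "nat \<Rightarrow> nat \<times> nat \<Rightarrow> nat \<Rightarrow> nat \<Rightarrow> bool" where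
  "F m e u v = (if (u,v) = e then True else if (v,u) = e then False else R m u v)"

lemma R_set: "{v. v < 2*m+1 \<and> R m u v} =
   (if u < 2*m+1 then {u<..<min (u+m+1) (2*m+1)} \<union> {..<u-m} else {})"
  unfolding R_def by auto

lemma R_outdeg: assumes "u < 2*m+1" shows "outdeg (2*m+1) (R m) u = m"
proof -
  have d: "{u<..<min (u+m+1) (2*m+1)} \<inter> {..<u-m} = {}" by auto
  have "card ({u<..<min (u+m+1) (2*m+1)} \<union> {..<u-m}) = 
        card {u<..<min (u+m+1) (2*m+1)} + card {..<u-m}"
    by (rule card_Un_disjoint) (use d in auto)
  also have "\<dots> = m" using assms by auto
  finally show ?thesis unfolding outdeg_def using R_set[of m u] assms by simp
qed

lemma R_tour: "tournament (2*m+1) (R m)"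
  unfolding tournament_def R_def by auto

lemma F_tour: assumes "R m b a" shows "tournament (2*m+1) (F m (a,b))"
  using assms R_tour[of m] unfolding tournament_def F_def by (auto simp: R_def)

lemma F_out:
  assumes "R m b a" "u < 2*m+1"
  shows "outdeg (2*m+1) (F m (a,b)) u = (if u = a then m+1 else if u = b then m - 1 else m)"
proof -
  have ab: "a \<noteq> b" "a < 2*m+1" "b < 2*m+1" "\<not> R m a b" using assms unfolding R_def by auto
  have o: "\<And>w. w < 2*m+1 \<Longrightarrow> card {v. v < 2*m+1 \<and> R m w v} = m"
    using R_outdeg unfolding outdeg_def by blast
  show ?thesis
  proof (cases "u = a")
    case True
    have "{v. v < 2*m+1 \<and> F m (a,b) u v} = insert b {v. v < 2*m+1 \<and> R m a v}"
      using True ab unfolding F_def by auto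
    then show ?thesis using True ab o[of a] unfolding outdeg_def by simp
  next
    case na: False
    show ?thesis
    proof (cases "u = b")
      case True
      have "{v. v < 2*m+1 \<and> F m (a,b) u v} = {v. v < 2*m+1 \<and> R m b v} - {a}"
        using True ab unfolding F_def by auto
      then show ?thesis using True ab o[of b] assms(1) na unfolding outdeg_def by simp
    next
      case False
      have "{v. v < 2*m+1 \<and> F m (a,b) u v} = {v. v < 2*m+1 \<and> R m u v}"
        using False na unfolding F_def by auto
      then show ?thesis using False na o[of u] assms(2) unfolding outdeg_def by simp
    qed
  qed
qed

lemma F_losses: assumes "R m b a" "m \<ge> 1"
  shows "champ_losses (2*m+1) (F m (a,b)) = m - 1"
proof -
  have a: "a < 2*m+1" using assms unfolding R_def by auto
  have "Max {outdeg (2*m+1) (F m (a,b)) v | v. v < 2*m+1} = m+1"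
  proof (rule Max_eqI)
    show "finite {outdeg (2*m+1) (F m (a,b)) v | v. v < 2*m+1}" by simp
    show "\<And>y. y \<in> {outdeg (2*m+1) (F m (a,b)) v | v. v < 2*m+1} \<Longrightarrow> y \<le> m+1"
      using F_out[OF assms(1)] by auto
    show "m+1 \<in> {outdeg (2*m+1) (F m (a,b)) v | v. v < 2*m+1}"
      using F_out[OF assms(1) a] a by force
  qed
  then show ?thesis unfolding champ_losses_def by simp
qed

lemma F_champ: assumes "R m b a" "m \<ge> 1"
  shows "champion (2*m+1) (F m (a,b)) v \<longleftrightarrow> v = a"
proof -
  have a: "a < 2*m+1" using assms unfolding R_def by auto
  show ?thesis
  proof
    assume c: "champion (2*m+1) (F m (a,b)) v"
    then have "v < 2*m+1" "outdeg (2*m+1) (F m (a,b)) a \<le> outdeg (2*m+1) (F m (a,b)) v"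
      unfolding champion_def using a by auto
    then show "v = a" using F_out[OF assms(1)] a by (auto split: if_splits)
  next
    assume "v = a"
    then show "champion (2*m+1) (F m (a,b)) v"
      unfolding champion_def using F_out[OF assms(1)] a by auto
  qed
qed

definition E :: "nat \<Rightarrow> (nat \<times> nat) set" where
  "E m = {(a,b). a < 2*m+1 \<and> b < 2*m+1 \<and> R m b a}"

lemma E_card: "card (E m) = (2*m+1) * m"
proof -
  have "E m = (\<lambda>(b,a). (a,b)) ` (SIGMA b:{..<2*m+1}. {a. a < 2*m+1 \<and> R m b a})"
    unfolding E_def by force
  moreover have "inj_on (\<lambda>(b,a). (a,b)) (SIGMA b:{..<2*m+1}. {a. a < 2*m+1 \<and> R m b a})"
    by (auto simp: inj_on_def)
  ultimately have "card (E m) = card (SIGMA b:{..<2*m+1}. {a. a < 2*m+1 \<and> R m b a})"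
    by (simp add: card_image)
  also have "\<dots> = (\<Sum>b<2*m+1. card {a. a < 2*m+1 \<and> R m b a})"
    by (rule card_SigmaI) auto
  also have "\<dots> = (\<Sum>b<2*m+1. m)"
    using R_outdeg unfolding outdeg_def by (intro sum.cong) auto
  finally show ?thesis by simp
qed

lemma E_finite: "finite (E m)"
  unfolding E_def by (rule finite_subset[of _ "{..<2*m+1} \<times> {..<2*m+1}"]) auto

lemma core:
  assumes "\<forall>e\<in>E m. lookups (F m e) t < k"
  shows "card {e \<in> E m. run (F m e) t = fst e} \<le> 2*k + (2*m+1)"
proof -
  define S where "S = qs (R m) k t"
  have S: "finite S" "card S \<le> k" using qs_card unfolding S_def by auto
  have sub: "{e \<in> E m. run (F m e) t = fst e} \<subseteq> (S \<union> prod.swap ` S) \<union> ({run (R m) t} \<times> {..<2*m+1})"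
  proof
    fix e assume e: "e \<in> {e \<in> E m. run (F m e) t = fst e}"
    obtain a b where ab: "e = (a,b)" by (cases e)
    show "e \<in> (S \<union> prod.swap ` S) \<union> ({run (R m) t} \<times> {..<2*m+1})"
    proof (cases "(a,b) \<in> S \<or> (b,a) \<in> S")
      case True
      then have "e \<in> S \<or> e \<in> prod.swap ` S" using ab by (auto intro: image_eqI[where x="(b,a)"])
      then show ?thesis by blast
    next
      case False
      have ag: "\<forall>(u,v)\<in>qs (R m) k t. F m e u v = R m u v"
      proof (intro ballI, clarify)
        fix u v assume uv: "(u,v) \<in> qs (R m) k t"
        have ne1: "(u,v) \<noteq> (a,b)" using False uv unfolding S_def by blast
        have ne2: "(v,u) \<noteq> (a,b)" using False uv unfolding S_def by blast
        show "F m e u v = R m u v" unfolding F_def ab by (simp only: if_not_P[OF ne1] if_not_P[OF ne2])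
      qed
      note A = agree[OF ag]
      have lk: "lookups (F m e) t < k" using assms e by auto
      have "lookups (R m) t < k" using A lk by linarith
      then have "run (F m e) t = run (R m) t" using A by blast
      then show ?thesis using e ab unfolding E_def by auto
    qed
  qed
  have "card {e \<in> E m. run (F m e) t = fst e} \<le> card ((S \<union> prod.swap ` S) \<union> ({run (R m) t} \<times> {..<2*m+1}))"
    by (rule card_mono) (use S sub in auto)
  also have "\<dots> \<le> card S + card (prod.swap ` S) + card ({run (R m) t} \<times> {..<2*m+1::nat})"
    by (meson add_le_mono card_Un_le le_trans order_refl)
  also have "\<dots> \<le> k + k + (2*m+1)"
    using S card_image_le[OF S(1), of prod.swap] by (simp add: card_cartesian_product)
  finally show ?thesis by simp
qed

theorem theorem2:
  fixes p :: real and q :: "nat \<Rightarrow> nat \<Rightarrow> real"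
  assumes "p > 0"
    and "\<forall>\<epsilon>>0. \<exists>N. \<forall>n \<ge> N. \<forall>l \<ge> N. q n l \<le> \<epsilon> * real l * real n"
  shows "\<forall>n0. \<exists>n \<ge> n0. \<forall>A :: dtree pmf. \<exists>T. tournament n T \<and>
           ((\<exists>t \<in> set_pmf A. real (lookups T t) > q n (champ_losses n T)) \<or>
            measure_pmf.prob A {t. champion n T (run T t)} < p)"
proof
  fix n0
  obtain N where N: "\<forall>n \<ge> N. \<forall>l \<ge> N. q n l \<le> p/8 * real l * real n"
  proof -
    have "p/8 > 0" using assms(1) by simp
    then have "\<exists>N. \<forall>n \<ge> N. \<forall>l \<ge> N. q n l \<le> p/8 * real l * real n" using assms(2) by blast
    then show ?thesis using that by blast
  qed
  define m where "m = n0 + N + 1 + nat \<lceil>4/p\<rceil>"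
  define n where "n = 2*m+1"
  have m1: "m \<ge> 1" and mN: "m - 1 \<ge> N" and nN: "n \<ge> N" and n0: "n \<ge> n0"
    unfolding m_def n_def by auto
  have "real (nat \<lceil>4/p\<rceil>) \<ge> 4/p"
  proof -
    have "4/p \<le> real_of_int \<lceil>4/p\<rceil>" by (rule le_of_int_ceiling)
    also have "\<dots> \<le> real (nat \<lceil>4/p\<rceil>)" by linarith
    finally show ?thesis .
  qed
  then have "real m \<ge> 4/p" unfolding m_def by simp
  then have pm: "p * real m \<ge> 4" using assms(1) by (simp add: field_simps)
  define Q where "Q = q n (m-1)"
  have Qb: "Q \<le> p/8 * real (m-1) * real n" using N mN nN unfolding Q_def by blast
  show "\<exists>n \<ge> n0. \<forall>A :: dtree pmf. \<exists>T. tournament n T \<and>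
           ((\<exists>t \<in> set_pmf A. real (lookups T t) > q n (champ_losses n T)) \<or>
            measure_pmf.prob A {t. champion n T (run T t)} < p)"
  proof (intro exI[of _ n] conjI allI n0)
    fix A :: "dtree pmf"
    show "\<exists>T. tournament n T \<and>
           ((\<exists>t \<in> set_pmf A. real (lookups T t) > q n (champ_losses n T)) \<or>
            measure_pmf.prob A {t. champion n T (run T t)} < p)"
    proof (rule ccontr)
      assume H: "\<not> ?thesis"
      have H1: "\<forall>e\<in>E m. \<forall>t\<in>set_pmf A. real (lookups (F m e) t) \<le> Q"
        and H2: "\<forall>e\<in>E m. measure_pmf.prob A {t. run (F m e) t = fst e} \<ge> p"
      proof -
        { fix e assume e: "e \<in> E m"
          obtain a b where ab: "e = (a,b)" by (cases e)
          have Rba: "R m b a" using e ab unfolding E_def by auto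
          have "tournament n (F m e)" using F_tour[OF Rba] ab n_def by simp
          have "champ_losses n (F m e) = m - 1" using F_losses[OF Rba m1] ab n_def by simp
          have "{t. champion n (F m e) (run (F m e) t)} = {t. run (F m e) t = fst e}"
            using F_champ[OF Rba m1] ab n_def by simp
          have "(\<forall>t\<in>set_pmf A. real (lookups (F m e) t) \<le> Q) \<and>
              measure_pmf.prob A {t. run (F m e) t = fst e} \<ge> p"
          proof -
            have nh: "\<not> (tournament n (F m e) \<and>
               ((\<exists>t \<in> set_pmf A. real (lookups (F m e) t) > q n (champ_losses n (F m e))) \<or>
                measure_pmf.prob A {t. champion n (F m e) (run (F m e) t)} < p))"
            proof
              assume h: "tournament n (F m e) \<and>
               ((\<exists>t \<in> set_pmf A. real (lookups (F m e) t) > q n (champ_losses n (F m e))) \<or>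
                measure_pmf.prob A {t. champion n (F m e) (run (F m e) t)} < p)"
              have "\<exists>T. tournament n T \<and>
               ((\<exists>t \<in> set_pmf A. real (lookups T t) > q n (champ_losses n T)) \<or>
                measure_pmf.prob A {t. champion n T (run T t)} < p)" by (rule exI[where x="F m e"]) (rule h)
              with H show False by contradiction
            qed
            show ?thesis using nh \<open>tournament n (F m e)\<close> \<open>champ_losses n (F m e) = m - 1\<close>
                \<open>{t. champion n (F m e) (run (F m e) t)} = {t. run (F m e) t = fst e}\<close>
              unfolding Q_def by (simp add: not_less)
          qed
        }
        then show "\<forall>e\<in>E m. \<forall>t\<in>set_pmf A. real (lookups (F m e) t) \<le> Q"
          and "\<forall>e\<in>E m. measure_pmf.prob A {t. run (F m e) t = fst e} \<ge> p" by auto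
      qed
      have e0: "(0, m+1) \<in> E m" unfolding E_def R_def using m1 by auto
      obtain t0 where "t0 \<in> set_pmf A" using set_pmf_not_empty[of A] by blast
      then have "real (lookups (F m (0, m+1)) t0) \<le> Q" using H1 e0 by blast
      moreover have "real (lookups (F m (0, m+1)) t0) \<ge> 0" by simp
      ultimately have Q0: "Q \<ge> 0" by linarith
      define k where "k = nat \<lfloor>Q\<rfloor> + 1"
      have kQ: "real k \<le> Q + 1" "Q < real k" unfolding k_def using Q0 by linarith+
      have cb: "\<forall>t\<in>set_pmf A. real (card {e \<in> E m. run (F m e) t = fst e}) \<le> 2*real k + real n"
      proof
        fix t assume t: "t \<in> set_pmf A"
        have "\<forall>e\<in>E m. lookups (F m e) t < k"
        proof
          fix e assume "e \<in> E m"
          then have "real (lookups (F m e) t) \<le> Q" using H1 t by blast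
          then have "real (lookups (F m e) t) < real k" using kQ by linarith
          then show "lookups (F m e) t < k" by simp
        qed
        from core[OF this] show "real (card {e \<in> E m. run (F m e) t = fst e}) \<le> 2*real k + real n"
          unfolding n_def by linarith
      qed
      define f where "f = (\<lambda>e t. indicator {t. run (F m e) t = fst e} t :: real)"
      have int: "\<And>e. integrable (measure_pmf A) (f e)"
        unfolding f_def by (rule measure_pmf.integrable_const_bound[where B=1]) auto
      have "(\<Sum>e\<in>E m. measure_pmf.prob A {t. run (F m e) t = fst e}) =
            (\<Sum>e\<in>E m. measure_pmf.expectation A (f e))"
        unfolding f_def by simp
      also have "\<dots> = measure_pmf.expectation A (\<lambda>t. \<Sum>e\<in>E m. f e t)"
        using Bochner_Integration.integral_sum[where I="E m" and M="measure_pmf A" and f=f] int by simp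
      also have "\<dots> \<le> 2*real k + real n"
      proof (rule measure_pmf.integral_le_const)
        show "integrable (measure_pmf A) (\<lambda>t. \<Sum>e\<in>E m. f e t)" using int by simp
        show "AE t in measure_pmf A. (\<Sum>e\<in>E m. f e t) \<le> 2*real k + real n"
        proof (rule AE_pmfI)
          fix t assume t: "t \<in> set_pmf A"
          have "(\<Sum>e\<in>E m. f e t) = real (card {e \<in> E m. run (F m e) t = fst e})"
          proof -
            have "(\<Sum>e\<in>E m. f e t) = (\<Sum>e\<in>E m. if run (F m e) t = fst e then 1 else 0)"
              unfolding f_def by (intro sum.cong) (auto simp: indicator_def)
            also have "\<dots> = (\<Sum>e\<in>{e\<in>E m. run (F m e) t = fst e}. 1)"
              using E_finite[of m] by (rule sum.inter_filter[symmetric])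
            finally show ?thesis by simp
          qed
          then show "(\<Sum>e\<in>E m. f e t) \<le> 2*real k + real n" using cb t by simp
        qed
      qed
      finally have up: "(\<Sum>e\<in>E m. measure_pmf.prob A {t. run (F m e) t = fst e}) \<le> 2*real k + real n" .
      have s1: "(\<Sum>e\<in>E m. p) \<le> (\<Sum>e\<in>E m. measure_pmf.prob A {t. run (F m e) t = fst e})"
        using H2 by (intro sum_mono) auto
      have "real (card (E m)) = real n * real m"
        unfolding E_card n_def by (simp only: of_nat_mult)
      then have s2: "(\<Sum>e\<in>E m. p) = p * (real n * real m)" by (simp add: mult.commute)
      from s1 s2 have low: "p * (real n * real m) \<le> 2*real k + real n"
        using up by linarith
      have "real (m-1) \<le> real m" by simp
      then have "p/8 * real (m-1) * real n \<le> p/8 * real m * real n"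
        using assms(1) by (intro mult_right_mono mult_left_mono) auto
      then have "Q \<le> p/8 * real m * real n" using Qb by linarith
      note Qm = this
      define X where "X = p * real m * real n"
      have X1: "p/8 * real m * real n = X/8" unfolding X_def by simp
      have X2: "p * (real n * real m) = X" unfolding X_def by (simp add: mult_ac)
      have X3: "X \<ge> 4 * real n" unfolding X_def using pm by (intro mult_right_mono) auto
      have "real n \<ge> 3" unfolding n_def using m1 by simp
      then show False using Qm low kQ X1 X2 X3 by linarith
    qed
  qed
qed

end
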